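(* Let $G$ be a finite simple connected well-dominated graph of order at least $2$ that has an isolatable vertex. Then the Cartesian product $G \,\square\, H$ is not well-dominated for any finite simple connected graph $H$ of order at least $2$.
   Context: A vertex $x$ of $G$ is isolatable if there is an independent set $I$ in $G$ such that $x$ is an isolated vertex of the induced subgraph $G-N[I]$, where $N[I]$ is the closed neighborhood of $I$. A graph is well-dominated if every minimal (with respect to inclusion) dominating set is a minimum dominating set. The Cartesian product $G\,\square\, H$ has vertex set $V(G)\times V(H)$, with $(g_1,h_1)$ adjacent to $(g_2,h_2)$ iff either ($g_1=g_2$ and $h_1h_2\in E(H)$) or ($h_1=h_2$ and $g_1g_2\in E(G)$). *)

theory Defs
  imports Main
begin

definition simple_graph :: "'a set \<Rightarrow> ('a \<Rightarrow> 'a \<Rightarrow> bool) \<Rightarrow> bool" where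
  "simple_graph V E \<longleftrightarrow> finite V \<and> (\<forall>x y. E x y \<longrightarrow> x \<in> V \<and> y \<in> V)
     \<and> (\<forall>x y. E x y \<longrightarrow> E y x) \<and> (\<forall>x. \<not> E x x)"

definition connected_graph :: "'a set \<Rightarrow> ('a \<Rightarrow> 'a \<Rightarrow> bool) \<Rightarrow> bool" where
  "connected_graph V E \<longleftrightarrow> V \<noteq> {} \<and> (\<forall>x\<in>V. \<forall>y\<in>V. E\<^sup>*\<^sup>* x y)"

definition closed_nbhd :: "'a set \<Rightarrow> ('a \<Rightarrow> 'a \<Rightarrow> bool) \<Rightarrow> 'a set \<Rightarrow> 'a set" where
  "closed_nbhd V E S = S \<union> {y\<in>V. \<exists>x\<in>S. E x y}"

definition dominating_set :: "'a set \<Rightarrow> ('a \<Rightarrow> 'a \<Rightarrow> bool) \<Rightarrow> 'a set \<Rightarrow> bool" where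
  "dominating_set V E D \<longleftrightarrow> D \<subseteq> V \<and> (\<forall>v\<in>V. v \<in> D \<or> (\<exists>u\<in>D. E u v))"

definition minimal_dominating_set :: "'a set \<Rightarrow> ('a \<Rightarrow> 'a \<Rightarrow> bool) \<Rightarrow> 'a set \<Rightarrow> bool" where
  "minimal_dominating_set V E D \<longleftrightarrow> dominating_set V E D \<and>
     (\<forall>D'. D' \<subset> D \<longrightarrow> \<not> dominating_set V E D')"

definition minimum_dominating_set :: "'a set \<Rightarrow> ('a \<Rightarrow> 'a \<Rightarrow> bool) \<Rightarrow> 'a set \<Rightarrow> bool" where
  "minimum_dominating_set V E D \<longleftrightarrow> dominating_set V E D \<and>
     (\<forall>D'. dominating_set V E D' \<longrightarrow> card D \<le> card D')"

definition well_dominated :: "'a set \<Rightarrow> ('a \<Rightarrow> 'a \<Rightarrow> bool) \<Rightarrow> bool" where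
  "well_dominated V E \<longleftrightarrow> (\<forall>D. minimal_dominating_set V E D \<longrightarrow> minimum_dominating_set V E D)"

definition independent_set :: "'a set \<Rightarrow> ('a \<Rightarrow> 'a \<Rightarrow> bool) \<Rightarrow> 'a set \<Rightarrow> bool" where
  "independent_set V E I \<longleftrightarrow> I \<subseteq> V \<and> (\<forall>x\<in>I. \<forall>y\<in>I. \<not> E x y)"

definition isolatable :: "'a set \<Rightarrow> ('a \<Rightarrow> 'a \<Rightarrow> bool) \<Rightarrow> 'a \<Rightarrow> bool" where
  "isolatable V E x \<longleftrightarrow> (\<exists>I. independent_set V E I \<and>
     x \<in> V - closed_nbhd V E I \<and>
     (\<forall>y \<in> V - closed_nbhd V E I. \<not> E x y))"

definition cart_prod_vertices :: "'a set \<Rightarrow> 'b set \<Rightarrow> ('a \<times> 'b) set" where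
  "cart_prod_vertices VG VH = VG \<times> VH"

definition cart_prod_edges ::
  "('a \<Rightarrow> 'a \<Rightarrow> bool) \<Rightarrow> ('b \<Rightarrow> 'b \<Rightarrow> bool) \<Rightarrow> ('a \<times> 'b) \<Rightarrow> ('a \<times> 'b) \<Rightarrow> bool" where
  "cart_prod_edges EG EH p q \<longleftrightarrow>
     (fst p = fst q \<and> EH (snd p) (snd q)) \<or> (snd p = snd q \<and> EG (fst p) (fst q))"

end

theory Submission
  imports Defs
begin

lemma has_nbr:
  assumes "connected_graph V E" "card V \<ge> 2" "v \<in> V" shows "\<exists>u. E v u"
proof -
  have fin: "finite V" using assms(2) card.infinite by fastforce
  have "card (V - {v}) \<ge> 1" using assms(2,3) fin by (simp add: card_Diff_singleton)
  then have "V - {v} \<noteq> {}" by (metis card.empty not_one_le_zero)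
  then obtain w where w: "w \<in> V" "w \<noteq> v" by blast
  have "E\<^sup>*\<^sup>* v w" using assms(1) assms(3) w unfolding connected_graph_def by blast
  then show ?thesis using w(2) by (metis converse_rtranclpE)
qed

lemma exists_min_dom:
  assumes "simple_graph V E" shows "\<exists>D. minimum_dominating_set V E D"
proof -
  have "dominating_set V E V" by (simp add: dominating_set_def)
  then obtain D where D: "dominating_set V E D" and m: "\<forall>D'. dominating_set V E D' \<longrightarrow> card D \<le> card D'"
    using ex_has_least_nat[of "dominating_set V E" V card] by blast
  thus ?thesis unfolding minimum_dominating_set_def by blast
qed

lemma bc:
  assumes sg: "simple_graph V E" and noiso: "\<forall>v\<in>V. \<exists>u. E v u"
  shows "\<exists>D. minimum_dominating_set V E D \<and> (\<forall>d\<in>D. \<exists>p\<in>V. p \<notin> D \<and> E d p \<and> (\<forall>d'\<in>D. E d' p \<longrightarrow> d' = d))"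
proof -
  have fin: "finite V" and inV: "\<And>x y. E x y \<Longrightarrow> x \<in> V \<and> y \<in> V"
    and sym: "\<And>x y. E x y \<Longrightarrow> E y x" and irr: "\<And>x. \<not> E x x"
    using sg unfolding simple_graph_def by auto
  define f where "f D = card {u\<in>D. \<exists>z\<in>D. E u z}" for D
  obtain D0 where "minimum_dominating_set V E D0" using exists_min_dom sg by blast
  have bnd: "\<forall>D. minimum_dominating_set V E D \<longrightarrow> f D < Suc (card V)"
  proof (intro allI impI)
    fix D assume "minimum_dominating_set V E D"
    then have "D \<subseteq> V" unfolding minimum_dominating_set_def dominating_set_def by auto
    then have "{u\<in>D. \<exists>z\<in>D. E u z} \<subseteq> V" by auto
    then show "f D < Suc (card V)" unfolding f_def using card_mono[OF fin] by (simp add: le_imp_less_Suc)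
  qed
  obtain D where Dmin: "minimum_dominating_set V E D"
    and Dmax: "\<forall>D'. minimum_dominating_set V E D' \<longrightarrow> f D' \<le> f D"
    using ex_has_greatest_nat[of "minimum_dominating_set V E" D0 f "Suc (card V)"]
      \<open>minimum_dominating_set V E D0\<close> bnd by blast
  have Ddom: "dominating_set V E D" and Dle: "\<And>D'. dominating_set V E D' \<Longrightarrow> card D \<le> card D'"
    using Dmin unfolding minimum_dominating_set_def by auto
  have DV: "D \<subseteq> V" using Ddom unfolding dominating_set_def by auto
  have finD: "finite D" using DV fin finite_subset by auto
  have "\<forall>d\<in>D. \<exists>p\<in>V. p \<notin> D \<and> E d p \<and> (\<forall>d'\<in>D. E d' p \<longrightarrow> d' = d)"
  proof (rule ccontr)
    assume "\<not> (\<forall>d\<in>D. \<exists>p\<in>V. p \<notin> D \<and> E d p \<and> (\<forall>d'\<in>D. E d' p \<longrightarrow> d' = d))"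
    then obtain d where dD: "d \<in> D"
      and nop: "\<not>(\<exists>p\<in>V. p \<notin> D \<and> E d p \<and> (\<forall>d'\<in>D. E d' p \<longrightarrow> d' = d))" by blast
    have "\<not> dominating_set V E (D - {d})"
    proof
      assume "dominating_set V E (D - {d})"
      then have "card D \<le> card (D - {d})" by (rule Dle)
      moreover have "card (D - {d}) < card D" using finD dD by (rule card_Diff1_less)
      ultimately show False by simp
    qed
    then obtain v where vV: "v \<in> V" and v1: "v \<notin> D - {d}" and v2: "\<not>(\<exists>u\<in>D - {d}. E u v)"
      using DV unfolding dominating_set_def by blast
    have "v = d"
    proof (rule ccontr)
      assume "v \<noteq> d"
      then have "v \<notin> D" using v1 by blast
      then obtain u where "u \<in> D" "E u v" using Ddom vV unfolding dominating_set_def by blast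
      then have "u = d" using v2 by blast
      then show False using nop vV \<open>v\<notin>D\<close> \<open>E u v\<close> v2 by blast
    qed
    then have disol: "\<And>u. u \<in> D \<Longrightarrow> \<not> E d u" using v2 sym irr by blast
    obtain w where dw: "E d w" using noiso dD DV by blast
    have wV: "w \<in> V" using inV dw by blast
    have wD: "w \<notin> D" using disol dw by blast
    obtain d' where d'D: "d' \<in> D" and d'w: "E d' w" and d'd: "d' \<noteq> d" using nop wV wD dw by blast
    define D' where "D' = insert w (D - {d})"
    have D'dom: "dominating_set V E D'"
      unfolding dominating_set_def
    proof (intro conjI ballI)
      show "D' \<subseteq> V" using DV wV D'_def by auto
    next
      fix v assume vV: "v \<in> V"
      show "v \<in> D' \<or> (\<exists>u\<in>D'. E u v)"
      proof (cases "v \<in> D")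
        case True
        then show ?thesis
        proof (cases "v = d")
          case True then show ?thesis using dw sym D'_def by auto
        next
          case False then show ?thesis using \<open>v\<in>D\<close> D'_def by auto
        qed
      next
        case False
        then obtain u where u: "u \<in> D" "E u v" using Ddom vV unfolding dominating_set_def by blast
        show ?thesis
        proof (cases "u = d")
          case True
          then obtain d'' where "d'' \<in> D" "E d'' v" "d'' \<noteq> d" using nop vV False u by blast
          then show ?thesis using D'_def by auto
        next
          case False then show ?thesis using u D'_def by auto
        qed
      qed
    qed
    have "card D' = Suc (card (D - {d}))" using D'_def finD wD by (simp add: card_insert_disjoint)
    moreover have "card (D - {d}) = card D - 1" using finD dD by (simp add: card_Diff_singleton)
    moreover have "card D \<ge> 1" using finD dD by (metis One_nat_def Suc_leI card_gt_0_iff empty_iff)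
    ultimately have cardD': "card D' = card D" by simp
    have D'min: "minimum_dominating_set V E D'"
      unfolding minimum_dominating_set_def using D'dom cardD' Dle by auto
    have sub: "insert w {u\<in>D. \<exists>z\<in>D. E u z} \<subseteq> {u\<in>D'. \<exists>z\<in>D'. E u z}"
    proof
      fix y assume "y \<in> insert w {u\<in>D. \<exists>z\<in>D. E u z}"
      then show "y \<in> {u\<in>D'. \<exists>z\<in>D'. E u z}"
      proof
        assume "y = w" then show ?thesis using D'_def d'D d'd d'w sym by auto
      next
        assume "y \<in> {u\<in>D. \<exists>z\<in>D. E u z}"
        then obtain z where yz: "y \<in> D" "z \<in> D" "E y z" by blast
        moreover have "y \<noteq> d" using disol yz by blast
        moreover have "z \<noteq> d" using disol yz sym by blast
        ultimately show ?thesis using D'_def by auto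
      qed
    qed
    have finD': "finite D'" using D'_def finD by auto
    have "f D < f D'"
    proof -
      have "finite {u\<in>D. \<exists>z\<in>D. E u z}" using finD by auto
      then have "card (insert w {u\<in>D. \<exists>z\<in>D. E u z}) = Suc (f D)"
        unfolding f_def using wD by (simp add: card_insert_disjoint)
      moreover have "card (insert w {u\<in>D. \<exists>z\<in>D. E u z}) \<le> f D'"
        unfolding f_def using sub finD' by (intro card_mono) auto
      ultimately show ?thesis by simp
    qed
    then show False using Dmax D'min by (meson not_le)
  qed
  then show ?thesis using Dmin by blast
qed

theorem corollary19:
  fixes VG :: "'a set" and EG :: "'a \<Rightarrow> 'a \<Rightarrow> bool"
    and VH :: "'b set" and EH :: "'b \<Rightarrow> 'b \<Rightarrow> bool"
  assumes "simple_graph VG EG" and "connected_graph VG EG" and "card VG \<ge> 2"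
    and "well_dominated VG EG"
    and "\<exists>x\<in>VG. isolatable VG EG x"
    and "simple_graph VH EH" and "connected_graph VH EH" and "card VH \<ge> 2"
  shows "\<not> well_dominated (cart_prod_vertices VG VH) (cart_prod_edges EG EH)"
proof
  assume WD0: "well_dominated (cart_prod_vertices VG VH) (cart_prod_edges EG EH)"
  let ?V = "VG \<times> VH"
  let ?E = "cart_prod_edges EG EH"
  have WD: "well_dominated ?V ?E" using WD0 unfolding cart_prod_vertices_def .
  have finG: "finite VG" and inVG: "\<And>x y. EG x y \<Longrightarrow> x \<in> VG \<and> y \<in> VG"
    and symG: "\<And>x y. EG x y \<Longrightarrow> EG y x" and irrG: "\<And>x. \<not> EG x x"
    using assms(1) unfolding simple_graph_def by auto
  have finH: "finite VH" and inVH: "\<And>x y. EH x y \<Longrightarrow> x \<in> VH \<and> y \<in> VH"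
    and symH: "\<And>x y. EH x y \<Longrightarrow> EH y x"
    using assms(6) unfolding simple_graph_def by auto
  have noisoG: "\<forall>v\<in>VG. \<exists>u. EG v u" using has_nbr[OF assms(2,3)] by blast
  obtain D where Dmin: "minimum_dominating_set VG EG D"
    and epn: "\<forall>d\<in>D. \<exists>p\<in>VG. p \<notin> D \<and> EG d p \<and> (\<forall>d'\<in>D. EG d' p \<longrightarrow> d' = d)"
    using bc[OF assms(1) noisoG] by blast
  have Ddom: "dominating_set VG EG D" and Dle: "\<And>D'. dominating_set VG EG D' \<Longrightarrow> card D \<le> card D'"
    using Dmin unfolding minimum_dominating_set_def by auto
  have DV: "D \<subseteq> VG" using Ddom unfolding dominating_set_def by auto
  have prod_min: "minimal_dominating_set ?V ?E (D \<times> VH)"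
    unfolding minimal_dominating_set_def
  proof (intro conjI allI impI)
    show "dominating_set ?V ?E (D \<times> VH)" unfolding dominating_set_def
    proof (intro conjI ballI)
      show "D \<times> VH \<subseteq> VG \<times> VH" using DV by auto
    next
      fix v assume "v \<in> VG \<times> VH"
      then obtain g h where v: "v = (g,h)" "g \<in> VG" "h \<in> VH" by auto
      show "v \<in> D \<times> VH \<or> (\<exists>u\<in>D \<times> VH. ?E u v)"
      proof (cases "g \<in> D")
        case True then show ?thesis using v by auto
      next
        case False
        then obtain u where "u \<in> D" "EG u g" using Ddom v unfolding dominating_set_def by blast
        then have "(u,h) \<in> D \<times> VH" "?E (u,h) v" using v unfolding cart_prod_edges_def by auto
        then show ?thesis by blast
      qed
    qed
  next
    fix D' assume D'sub: "D' \<subset> D \<times> VH"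
    then obtain d h where dh: "d \<in> D" "h \<in> VH" "(d,h) \<notin> D'" by auto
    obtain p where p: "p \<in> VG" "p \<notin> D" "EG d p" "\<forall>d'\<in>D. EG d' p \<longrightarrow> d' = d"
      using epn dh(1) by blast
    show "\<not> dominating_set ?V ?E D'"
    proof
      assume "dominating_set ?V ?E D'"
      then have "(p,h) \<in> D' \<or> (\<exists>u\<in>D'. ?E u (p,h))" using p(1) dh(2) unfolding dominating_set_def by blast
      moreover have "(p,h) \<notin> D'" using D'sub p by auto
      moreover have "\<not>(\<exists>u\<in>D'. ?E u (p,h))"
      proof
        assume "\<exists>u\<in>D'. ?E u (p,h)"
        then obtain a b where ab: "(a,b) \<in> D'" "?E (a,b) (p,h)" by auto
        then have aD: "a \<in> D" using D'sub by auto
        then have "a \<noteq> p" using p by auto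
        then have bh: "b = h" and "EG a p" using ab(2) unfolding cart_prod_edges_def by auto
        then have "a = d" using p aD by auto
        then show False using ab bh dh by auto
      qed
      ultimately show False by blast
    qed
  qed
  have prodle: "\<And>D1. dominating_set ?V ?E D1 \<Longrightarrow> card (D \<times> VH) \<le> card D1"
    using WD prod_min unfolding well_dominated_def minimum_dominating_set_def by blast
  obtain x where xV: "x \<in> VG" and xiso: "isolatable VG EG x" using assms(5) by blast
  obtain I where Iind: "independent_set VG EG I" and xnot: "x \<in> VG - closed_nbhd VG EG I"
    and xisol: "\<forall>y \<in> VG - closed_nbhd VG EG I. \<not> EG x y"
    using xiso unfolding isolatable_def by blast
  have IV: "I \<subseteq> VG" and Iind2: "\<And>a b. a \<in> I \<Longrightarrow> b \<in> I \<Longrightarrow> \<not> EG a b"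
    using Iind unfolding independent_set_def by auto
  have xI: "x \<notin> I" and xnI: "\<And>i. i \<in> I \<Longrightarrow> \<not> EG i x"
    using xnot xV unfolding closed_nbhd_def by auto
  have nbrx: "\<And>g. EG x g \<Longrightarrow> \<exists>i\<in>I. EG i g"
  proof -
    fix g assume xg: "EG x g"
    then have gV: "g \<in> VG" using inVG by blast
    then have "g \<in> closed_nbhd VG EG I" using xisol xg by blast
    moreover have "g \<notin> I" using xnI xg symG by blast
    ultimately show "\<exists>i\<in>I. EG i g" unfolding closed_nbhd_def by blast
  qed
  let ?P = "\<lambda>J. independent_set VG EG J \<and> insert x I \<subseteq> J"
  have P0: "?P (insert x I)"
    unfolding independent_set_def
  proof (intro conjI ballI subset_refl)
    show "insert x I \<subseteq> VG" using IV xV by blast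
  next
    fix a b assume ab: "a \<in> insert x I" "b \<in> insert x I"
    show "\<not> EG a b"
    proof
      assume e: "EG a b"
      show False
        using ab
      proof (elim insertE)
        assume "a = x" "b = x" then show False using e irrG by simp
      next
        assume "a = x" "b \<in> I" then show False using e symG xnI by blast
      next
        assume "a \<in> I" "b = x" then show False using e xnI by blast
      next
        assume "a \<in> I" "b \<in> I" then show False using e Iind2 by blast
      qed
    qed
  qed
  have Pbnd: "\<forall>J. ?P J \<longrightarrow> card J < Suc (card VG)"
    unfolding independent_set_def using card_mono[OF finG] by (simp add: le_imp_less_Suc)
  obtain J where PJ: "?P J" and Jmax: "\<forall>J'. ?P J' \<longrightarrow> card J' \<le> card J"
    using ex_has_greatest_nat[of ?P "insert x I" card "Suc (card VG)"] P0 Pbnd by blast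
  have JV: "J \<subseteq> VG" and Jind: "\<And>a b. a \<in> J \<Longrightarrow> b \<in> J \<Longrightarrow> \<not> EG a b"
    using PJ unfolding independent_set_def by auto
  have finJ: "finite J" using JV finG finite_subset by auto
  have xJ: "x \<in> J" and IJ: "I \<subseteq> J" using PJ by auto
  have Jdom: "dominating_set VG EG J"
    unfolding dominating_set_def
  proof (intro conjI ballI)
    show "J \<subseteq> VG" by (rule JV)
  next
    fix v assume vV: "v \<in> VG"
    show "v \<in> J \<or> (\<exists>u\<in>J. EG u v)"
    proof (rule ccontr)
      assume nv: "\<not> (v \<in> J \<or> (\<exists>u\<in>J. EG u v))"
      have "?P (insert v J)"
        unfolding independent_set_def
      proof (intro conjI ballI)
        show "insert v J \<subseteq> VG" using vV JV by blast
        show "insert x I \<subseteq> insert v J" using PJ by blast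
      next
        fix a b assume ab: "a \<in> insert v J" "b \<in> insert v J"
        show "\<not> EG a b"
        proof
          assume e: "EG a b"
          show False
            using ab
          proof (elim insertE)
            assume "a = v" "b = v" then show False using e irrG by simp
          next
            assume "a = v" "b \<in> J" then show False using e symG nv by blast
          next
            assume "a \<in> J" "b = v" then show False using e nv by blast
          next
            assume "a \<in> J" "b \<in> J" then show False using e Jind by blast
          qed
        qed
      qed
      then have "card (insert v J) \<le> card J" using Jmax by blast
      moreover have "card (insert v J) = Suc (card J)" using finJ nv by simp
      ultimately show False by simp
    qed
  qed
  have Jminl: "minimal_dominating_set VG EG J"
    unfolding minimal_dominating_set_def
  proof (intro conjI allI impI)
    show "dominating_set VG EG J" by (rule Jdom)
  next
    fix D' assume D'J: "D' \<subset> J"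
    then obtain j where j: "j \<in> J" "j \<notin> D'" by blast
    show "\<not> dominating_set VG EG D'"
    proof
      assume "dominating_set VG EG D'"
      then have "j \<in> D' \<or> (\<exists>u\<in>D'. EG u j)" using j JV unfolding dominating_set_def by blast
      then show False using j D'J Jind by blast
    qed
  qed
  have JleD: "card J \<le> card D"
    using assms(4) Jminl Ddom unfolding well_dominated_def minimum_dominating_set_def by blast
  obtain h1 where h1: "h1 \<in> VH" using assms(8) by fastforce
  obtain h' where h1h': "EH h1 h'" using has_nbr[OF assms(7,8) h1] by blast
  have h'V: "h' \<in> VH" and h'ne: "h' \<noteq> h1" using inVH[OF h1h'] h1h' assms(6)
    unfolding simple_graph_def by auto
  define D1 where "D1 = (J - {x}) \<times> VH \<union> {x} \<times> (VH - {h1})"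
  have D1dom: "dominating_set ?V ?E D1"
    unfolding dominating_set_def
  proof (intro conjI ballI)
    show "D1 \<subseteq> ?V" using JV xV D1_def by auto
  next
    fix v assume "v \<in> ?V"
    then obtain g h where v: "v = (g,h)" "g \<in> VG" "h \<in> VH" by auto
    show "v \<in> D1 \<or> (\<exists>u\<in>D1. ?E u v)"
    proof (cases "g = x")
      case True
      show ?thesis
      proof (cases "h = h1")
        case True
        have "(x,h') \<in> D1" using h'V h'ne D1_def by auto
        moreover have "?E (x,h') v" using v \<open>g = x\<close> True h1h' symH unfolding cart_prod_edges_def by auto
        ultimately show ?thesis by blast
      next
        case False then show ?thesis using v \<open>g = x\<close> D1_def by auto
      qed
    next
      case gx: False
      show ?thesis
      proof (cases "g \<in> J")
        case True then show ?thesis using v gx D1_def by auto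
      next
        case False
        then obtain u where u: "u \<in> J" "EG u g" using Jdom v unfolding dominating_set_def by blast
        show ?thesis
        proof (cases "u = x")
          case True
          then obtain i where "i \<in> I" "EG i g" using nbrx u by blast
          moreover then have "(i,h) \<in> D1" using IJ xI v D1_def by auto
          ultimately show ?thesis using v unfolding cart_prod_edges_def
            by (intro disjI2 bexI[of _ "(i,h)"]) auto
        next
          case False
          then have "(u,h) \<in> D1" using u v D1_def by auto
          then show ?thesis using u v unfolding cart_prod_edges_def
            by (intro disjI2 bexI[of _ "(u,h)"]) auto
        qed
      qed
    qed
  qed
  have c1: "card ((J - {x}) \<times> VH) = (card J - 1) * card VH"
    using finJ xJ by (simp add: card_cartesian_product card_Diff_singleton)
  have c2: "card ({x} \<times> (VH - {h1})) = card VH - 1"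
    using finH h1 by (simp add: card_cartesian_product card_Diff_singleton)
  have "card D1 \<le> (card J - 1) * card VH + (card VH - 1)"
    unfolding D1_def using card_Un_le c1 c2 by metis
  moreover have "card J \<ge> 1" using finJ xJ by (metis One_nat_def Suc_leI card_gt_0_iff empty_iff)
  moreover have "card VH \<ge> 1" using assms(8) by simp
  ultimately have "card D1 < card J * card VH"
    by (cases "card J") (auto simp: algebra_simps)
  also have "\<dots> \<le> card D * card VH" using JleD by simp
  also have "\<dots> = card (D \<times> VH)" by (simp add: card_cartesian_product)
  finally show False using prodle[OF D1dom] by simp
qed

end
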